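(* Let $\mathfrak{A}_m(W)(s,E_m,Q_m,Q_n)$ be the annihilating operator of the colored Jones polynomial of the Whitehead link defined in the context, and let $\varepsilon_s$ denote evaluation at $s=1$ (after which $E_m,Q_m,Q_n$ commute). Then \[\varepsilon_s\mathfrak{A}_m(W)(s,E_m,Q_m,Q_n)=-\frac{1}{(1+Q_m^2)^2Q_m^2Q_n^2}(E_m+1)(E_m-Q_m^2)A^{\mathrm{Lk}}_m(W)(E_m,Q_m,Q_n),\] where $A^{\mathrm{Lk}}_m(W)(E_m,Q_m,Q_n)=Q_m^4Q_n^2E_m^3+(Q_m^4Q_n^4-Q_m^2Q_n^4+Q_m^4-2Q_m^2Q_n^2-Q_m^2+Q_n^2)E_m^2+(Q_m^4Q_n^2-Q_m^2Q_n^4-2Q_m^2Q_n^2+Q_n^4-Q_m^2+1)E_m+Q_n^2.$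
   Context: $s$ is an indeterminate. Work in the algebra of polynomials in $E_m$ with coefficients in $\mathbb{Q}(s,Q_m,Q_n)$ written on the left, with $E_m\,p(s,Q_m,Q_n)=p(s,sQ_m,Q_n)\,E_m$ (the composition rule for $(E_mf)(m,n)=f(m+1,n)$, $(Q_mf)(m,n)=s^mf(m,n)$, $(Q_nf)(m,n)=s^nf(m,n)$). Put $\Phi_k(Q_m)=1-s^kQ_m^4$ and $u_1=\frac{1}{\Phi_6(Q_m)}E_m-\frac{s^2Q_m^2}{\Phi_2(Q_m)}$, $v_1=\frac{s^2Q_m^2}{\Phi_6(Q_m)}E_m-\frac{1}{\Phi_2(Q_m)}$, $u_2=\frac{s^{12}Q_m^4}{\Phi_{10}(Q_m)\Phi_{12}(Q_m)}E_m^2-\frac{s^4(1+s^2)Q_m^2}{\Phi_6(Q_m)\Phi_{10}(Q_m)}E_m+\frac{1}{\Phi_4(Q_m)\Phi_6(Q_m)}$, $v_2=\frac{1}{\Phi_{10}(Q_m)\Phi_{12}(Q_m)}E_m^2-\frac{s^2(1+s^2)Q_m^2}{\Phi_6(Q_m)\Phi_{10}(Q_m)}E_m+\frac{s^4Q_m^4}{\Phi_4(Q_m)\Phi_6(Q_m)}$, $Y=u_2u_1(E_m-s^2Q_m^2)$, $P^0_W(s,E_m,Q_m,Q_n)=(s^2-s^4)u_2v_1(Q_m^2E_m-1)+s^2(Q_n^2+1+Q_n^{-2})u_2u_1(Q_m^2E_m-1)+s^2u_2u_1(s^2Q_m^2+s^{-2}Q_m^{-2})(Q_m^2E_m-1)+(s^2-s^4)u_2(Q_m^2E_m-1)-Y(Q_m^2Q_n^2+Q_m^2Q_n^{-2}+3+Q_m^{-2}Q_n^2+Q_m^{-2}Q_n^{-2})+s^{-2}(Q_n^2-s^2+Q_n^{-2})v_2v_1(E_m-s^2Q_m^2)+s^{-2}v_2v_1(s^2Q_m^2+s^{-2}Q_m^{-2})(E_m-s^2Q_m^2)+(s^{-4}-s^{-2})v_2Q_m^{-2}(E_m-s^2Q_m^2)-s^{-4}v_2u_1(E_m-s^2Q_m^2)$,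 $P^1_W(s,E_m,Q_m)=(E_m+1)\frac{(1-s^2Q_m^2)(1-s^6Q_m^2)}{1+s^4Q_m^2}$, and $\mathfrak{A}_m(W)=P^1_W(s,sE_m,Q_m)P^0_W(s,sE_m,Q_m,Q_n)$ (substitute $sE_m$ for $E_m$). Here $\varepsilon_s$ sends a left-normalized expression $\sum_k c_k(s,Q_m,Q_n)E_m^k$ to the commutative polynomial $\sum_k c_k(1,Q_m,Q_n)E_m^k$. *)

theory Defs
  imports "HOL-Computational_Algebra.Polynomial" "HOL-Computational_Algebra.Fraction_Field"
begin

text \<open>Polynomials in s, Q_m, Q_n over the rationals: the innermost variable is s,
  the middle one Q_m, the outermost one Q_n.\<close>
type_synonym rp3 = "rat poly poly poly"

type_synonym K = "rp3 fract"

text \<open>Polynomials in Q_m (inner) and Q_n (outer), and the field Q(Q_m,Q_n).\<close>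
type_synonym rp2 = "rat poly poly"
type_synonym L = "rp2 fract"

definition sK :: K where "sK = Fract [:[:[:0, 1:]:]:] 1"
definition QmK :: K where "QmK = Fract [:[:0, 1:]:] 1"
definition QnK :: K where "QnK = Fract [:0, 1:] 1"

definition QmL :: L where "QmL = Fract [:[:0, 1:]:] 1"
definition QnL :: L where "QnL = Fract [:0, 1:] 1"

text \<open>The substitution Q_m := s Q_m on polynomials, and its extension to Q(s,Q_m,Q_n).\<close>
definition sig3 :: "rp3 \<Rightarrow> rp3" where
  "sig3 p = map_poly (\<lambda>q. pcompose q [:0, [:0, 1:]:]) p"

definition sigK :: "K \<Rightarrow> K" where
  "sigK x = (SOME y. \<exists>p q. q \<noteq> 0 \<and> x = Fract p q \<and> y = Fract (sig3 p) (sig3 q))"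

definition ev1 :: "rp3 \<Rightarrow> rp2" where
  "ev1 p = map_poly (map_poly (\<lambda>c. poly c 1)) p"

definition eval_s1 :: "K \<Rightarrow> L \<Rightarrow> bool" where
  "eval_s1 c d \<longleftrightarrow> (\<exists>p q. q \<noteq> 0 \<and> ev1 q \<noteq> 0 \<and> c = Fract p q \<and> d = Fract (ev1 p) (ev1 q))"

text \<open>A left-normalized operator sum_k c_k E_m^k is represented by the polynomial
  with coefficients c_k; multiplication uses E_m c = sigma(c) E_m.\<close>
definition skm :: "K poly \<Rightarrow> K poly \<Rightarrow> K poly" (infixl "**" 70) where
  "a ** b = (\<Sum>i\<le>degree a. smult (coeff a i) (monom 1 i * map_poly (sigK ^^ i) b))"

definition Em :: "K poly" where "Em = monom 1 1"

abbreviation C :: "K \<Rightarrow> K poly" where "C c \<equiv> [:c:]"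

definition Phi :: "nat \<Rightarrow> K" where "Phi k = 1 - sK ^ k * QmK ^ 4"

definition u1 :: "K poly \<Rightarrow> K poly" where
  "u1 e = C (1 / Phi 6) ** e - C (sK^2 * QmK^2 / Phi 2)"
definition v1 :: "K poly \<Rightarrow> K poly" where
  "v1 e = C (sK^2 * QmK^2 / Phi 6) ** e - C (1 / Phi 2)"
definition u2 :: "K poly \<Rightarrow> K poly" where
  "u2 e = C (sK^12 * QmK^4 / (Phi 10 * Phi 12)) ** e ** e
        - C (sK^4 * (1 + sK^2) * QmK^2 / (Phi 6 * Phi 10)) ** e
        + C (1 / (Phi 4 * Phi 6))"
definition v2 :: "K poly \<Rightarrow> K poly" where
  "v2 e = C (1 / (Phi 10 * Phi 12)) ** e ** e
        - C (sK^2 * (1 + sK^2) * QmK^2 / (Phi 6 * Phi 10)) ** e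
        + C (sK^4 * QmK^4 / (Phi 4 * Phi 6))"
definition Yop :: "K poly \<Rightarrow> K poly" where
  "Yop e = u2 e ** u1 e ** (e - C (sK^2 * QmK^2))"

definition P0 :: "K poly \<Rightarrow> K poly" where
  "P0 e =
     C (sK^2 - sK^4) ** u2 e ** v1 e ** (C (QmK^2) ** e - 1)
   + C (sK^2 * (QnK^2 + 1 + inverse (QnK^2))) ** u2 e ** u1 e ** (C (QmK^2) ** e - 1)
   + C (sK^2) ** u2 e ** u1 e ** C (sK^2 * QmK^2 + inverse (sK^2) * inverse (QmK^2))
       ** (C (QmK^2) ** e - 1)
   + C (sK^2 - sK^4) ** u2 e ** (C (QmK^2) ** e - 1)
   - Yop e ** C (QmK^2 * QnK^2 + QmK^2 * inverse (QnK^2) + 3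
                 + inverse (QmK^2) * QnK^2 + inverse (QmK^2) * inverse (QnK^2))
   + C (inverse (sK^2) * (QnK^2 - sK^2 + inverse (QnK^2))) ** v2 e ** v1 e
       ** (e - C (sK^2 * QmK^2))
   + C (inverse (sK^2)) ** v2 e ** v1 e ** C (sK^2 * QmK^2 + inverse (sK^2) * inverse (QmK^2))
       ** (e - C (sK^2 * QmK^2))
   + C (inverse (sK^4) - inverse (sK^2)) ** v2 e ** C (inverse (QmK^2)) ** (e - C (sK^2 * QmK^2))
   - C (inverse (sK^4)) ** v2 e ** u1 e ** (e - C (sK^2 * QmK^2))"

definition P1 :: "K poly \<Rightarrow> K poly" where
  "P1 e = (e + 1) ** C ((1 - sK^2 * QmK^2) * (1 - sK^6 * QmK^2) / (1 + sK^4 * QmK^2))"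

definition AmW :: "K poly" where
  "AmW = P1 (C sK ** Em) ** P0 (C sK ** Em)"

definition eps_s :: "K poly \<Rightarrow> L poly \<Rightarrow> bool" where
  "eps_s a b \<longleftrightarrow> (\<forall>k. eval_s1 (coeff a k) (coeff b k))"

definition ALk :: "L poly" where
  "ALk = [: QnL^2,
           QmL^4 * QnL^2 - QmL^2 * QnL^4 - 2 * QmL^2 * QnL^2 + QnL^4 - QmL^2 + 1,
           QmL^4 * QnL^4 - QmL^2 * QnL^4 + QmL^4 - 2 * QmL^2 * QnL^2 - QmL^2 + QnL^2,
           QmL^4 * QnL^2 :]"

end

theory Submission
  imports Defs
begin


definition rh :: "('a::comm_ring_1 \<Rightarrow> 'b::comm_ring_1) \<Rightarrow> bool" where
  "rh f \<longleftrightarrow> f 0 = 0 \<and> f 1 = 1 \<and> (\<forall>x y. f (x + y) = f x + f y) \<and> (\<forall>x y. f (x * y) = f x * f y)"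

lemma rh_0: "rh f \<Longrightarrow> f 0 = 0" and rh_1: "rh f \<Longrightarrow> f 1 = 1"
  and rh_add: "rh f \<Longrightarrow> f (x + y) = f x + f y" and rh_mult: "rh f \<Longrightarrow> f (x * y) = f x * f y"
  by (auto simp: rh_def)

lemma rh_minus: "rh f \<Longrightarrow> f (- x) = - f x"
proof -
  assume r: "rh f"
  have "f (x + - x) = f x + f (- x)" using rh_add[OF r] .
  then have "0 = f x + f (- x)" using rh_0[OF r] by simp
  then show ?thesis by (simp add: eq_neg_iff_add_eq_0 add.commute)
qed

lemma rh_diff: "rh f \<Longrightarrow> f (x - y) = f x - f y"
  using rh_add[of f x "- y"] rh_minus[of f y] by simp

lemma rh_sum: "rh f \<Longrightarrow> f (sum g A) = (\<Sum>a\<in>A. f (g a))"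
  by (induct A rule: infinite_finite_induct) (auto simp: rh_0 rh_add)

lemma rh_map_poly: assumes r: "rh f" shows "rh (map_poly f)"
proof -
  have f0: "f 0 = 0" using r by (simp add: rh_0)
  have a: "map_poly f (p + q) = map_poly f p + map_poly f q" for p q
    by (intro poly_eqI) (simp add: coeff_map_poly f0 rh_add[OF r])
  have m: "map_poly f (p * q) = map_poly f p * map_poly f q" for p q
    by (intro poly_eqI) (simp add: coeff_map_poly f0 coeff_mult rh_sum[OF r] rh_mult[OF r])
  show ?thesis unfolding rh_def using a m f0 rh_1[OF r] by simp
qed

lemma rh_h1: "rh (\<lambda>c::rat poly. poly c 1)"
  by (simp add: rh_def)

lemma rh_pcomp: "rh (\<lambda>q::'a::comm_ring_1 poly. pcompose q r)"
  by (simp add: rh_def pcompose_add pcompose_mult pcompose_const one_pCons)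

lemma rh_ev1: "rh ev1"
proof -
  have "ev1 = map_poly (map_poly (\<lambda>c::rat poly. poly c 1))" by (rule ext) (simp add: ev1_def)
  then show ?thesis using rh_map_poly[OF rh_map_poly[OF rh_h1]] by simp
qed

lemma sig3_eq: "sig3 = map_poly (\<lambda>q. pcompose q [:0, [:0, 1:]:])"
  by (rule ext) (simp add: sig3_def)

lemma rh_sig3: "rh sig3"
  unfolding sig3_eq by (rule rh_map_poly[OF rh_pcomp])

lemmas ev1_simps = rh_0[OF rh_ev1] rh_1[OF rh_ev1] rh_add[OF rh_ev1] rh_mult[OF rh_ev1]
  rh_minus[OF rh_ev1] rh_diff[OF rh_ev1]
lemmas sig3_simps = rh_0[OF rh_sig3] rh_1[OF rh_sig3] rh_add[OF rh_sig3] rh_mult[OF rh_sig3]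

lemma sig3_nz: assumes "q \<noteq> 0" shows "sig3 q \<noteq> 0"
proof -
  have "map_poly (\<lambda>q. pcompose q [:0, [:0, 1::rat:]:]) q \<noteq> 0"
    using assms
    by (subst map_poly_eq_0_iff) (auto simp: pcompose_eq_0_iff)
  then show ?thesis by (simp add: sig3_eq)
qed

lemma h1_pcomp: "map_poly (\<lambda>c::rat poly. poly c 1) (pcompose r [:0, [:0, 1:]:]) = map_poly (\<lambda>c. poly c 1) r"
proof (induct r)
  case 0 then show ?case by simp
next
  case (pCons a r)
  have r: "rh (map_poly (\<lambda>c::rat poly. poly c 1))" by (rule rh_map_poly[OF rh_h1])
  have Y: "map_poly (\<lambda>c::rat poly. poly c 1) [:0, [:0, 1:]:] = [:0, 1:]"
    by (simp add: map_poly_pCons)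
  have "map_poly (\<lambda>c::rat poly. poly c 1) (pcompose (pCons a r) [:0, [:0, 1:]:])
      = map_poly (\<lambda>c::rat poly. poly c 1) [:a:] + map_poly (\<lambda>c::rat poly. poly c 1) [:0, [:0, 1:]:]
        * map_poly (\<lambda>c::rat poly. poly c 1) (pcompose r [:0, [:0, 1:]:])"
    by (simp only: pcompose_pCons rh_add[OF r] rh_mult[OF r])
  also have "\<dots> = pCons (poly a 1) (map_poly (\<lambda>c::rat poly. poly c 1) r)"
    unfolding Y pCons(2) by (simp add: map_poly_pCons)
  also have "\<dots> = map_poly (\<lambda>c::rat poly. poly c 1) (pCons a r)"
    by (simp add: map_poly_pCons)
  finally show ?case .
qed

lemma ev1_sig3: "ev1 (sig3 p) = ev1 p"
  by (intro poly_eqI) (simp add: ev1_def sig3_def coeff_map_poly h1_pcomp)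

lemma sigK_Fract: assumes q: "q \<noteq> 0" shows "sigK (Fract p q) = Fract (sig3 p) (sig3 q)"
proof -
  let ?P = "\<lambda>y. \<exists>p' q'. q' \<noteq> 0 \<and> Fract p q = Fract p' q' \<and> y = Fract (sig3 p') (sig3 q')"
  have "?P (Fract (sig3 p) (sig3 q))" using q by blast
  then have "?P (SOME y. ?P y)" by (rule someI)
  then obtain p' q' where q': "q' \<noteq> 0" and e: "Fract p q = Fract p' q'"
    and y: "(SOME y. ?P y) = Fract (sig3 p') (sig3 q')" by blast
  have "p * q' = p' * q" using e q q' by (simp add: eq_fract)
  then have "sig3 p * sig3 q' = sig3 p' * sig3 q" by (metis sig3_simps(4))
  then have "Fract (sig3 p') (sig3 q') = Fract (sig3 p) (sig3 q)"
    using sig3_nz[OF q] sig3_nz[OF q'] by (simp add: eq_fract)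
  then show ?thesis using y by (simp add: sigK_def)
qed

lemma eval_sig: assumes "eval_s1 c d" shows "eval_s1 (sigK c) d"
proof -
  obtain p q where "q \<noteq> 0" "ev1 q \<noteq> 0" "c = Fract p q" "d = Fract (ev1 p) (ev1 q)"
    using assms by (auto simp: eval_s1_def)
  then show ?thesis unfolding eval_s1_def
    by (intro exI[of _ "sig3 p"] exI[of _ "sig3 q"]) (simp add: sigK_Fract sig3_nz ev1_sig3)
qed

lemma eval_sigpow: "eval_s1 c d \<Longrightarrow> eval_s1 ((sigK ^^ i) c) d"
  by (induct i) (auto intro: eval_sig)

lemma sigK0: "sigK 0 = 0"
  by (simp add: Zero_fract_def sigK_Fract sig3_simps eq_fract)

lemma sigpow0: "(sigK ^^ i) 0 = 0"
  by (induct i) (simp_all add: sigK0)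

lemma eval_Fract_I: "q \<noteq> 0 \<Longrightarrow> ev1 q \<noteq> 0 \<Longrightarrow> eval_s1 (Fract p q) (Fract (ev1 p) (ev1 q))"
  unfolding eval_s1_def by blast

lemma eval_zero: "eval_s1 0 0"
  using eval_Fract_I[of 1 0] by (simp add: ev1_simps Zero_fract_def)

lemma eval_one: "eval_s1 1 1"
  using eval_Fract_I[of 1 1] by (simp add: ev1_simps One_fract_def)

lemma eval_add: assumes "eval_s1 a b" "eval_s1 c d" shows "eval_s1 (a + c) (b + d)"
proof -
  obtain p q where 1: "q \<noteq> 0" "ev1 q \<noteq> 0" "a = Fract p q" "b = Fract (ev1 p) (ev1 q)"
    using assms(1) by (auto simp: eval_s1_def)
  obtain p' q' where 2: "q' \<noteq> 0" "ev1 q' \<noteq> 0" "c = Fract p' q'" "d = Fract (ev1 p') (ev1 q')"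
    using assms(2) by (auto simp: eval_s1_def)
  show ?thesis using 1 2 eval_Fract_I[of "q * q'" "p * q' + p' * q"] by (simp add: ev1_simps)
qed

lemma eval_mult: assumes "eval_s1 a b" "eval_s1 c d" shows "eval_s1 (a * c) (b * d)"
proof -
  obtain p q where 1: "q \<noteq> 0" "ev1 q \<noteq> 0" "a = Fract p q" "b = Fract (ev1 p) (ev1 q)"
    using assms(1) by (auto simp: eval_s1_def)
  obtain p' q' where 2: "q' \<noteq> 0" "ev1 q' \<noteq> 0" "c = Fract p' q'" "d = Fract (ev1 p') (ev1 q')"
    using assms(2) by (auto simp: eval_s1_def)
  show ?thesis using 1 2 eval_Fract_I[of "q * q'" "p * p'"] by (simp add: ev1_simps)
qed

lemma eval_uminus: assumes "eval_s1 a b" shows "eval_s1 (- a) (- b)"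
proof -
  obtain p q where 1: "q \<noteq> 0" "ev1 q \<noteq> 0" "a = Fract p q" "b = Fract (ev1 p) (ev1 q)"
    using assms(1) by (auto simp: eval_s1_def)
  show ?thesis using 1 eval_Fract_I[of "q" "- p"] by (simp add: ev1_simps)
qed

lemma eval_diff: "eval_s1 a b \<Longrightarrow> eval_s1 c d \<Longrightarrow> eval_s1 (a - c) (b - d)"
  using eval_add[of a b "- c" "- d"] eval_uminus[of c d] by simp

lemma eval_inverse: assumes "eval_s1 a b" "b \<noteq> 0" shows "eval_s1 (inverse a) (inverse b)"
proof -
  obtain p q where 1: "q \<noteq> 0" "ev1 q \<noteq> 0" "a = Fract p q" "b = Fract (ev1 p) (ev1 q)"
    using assms(1) by (auto simp: eval_s1_def)
  have e: "ev1 p \<noteq> 0" using 1 assms(2) by (auto simp: eq_fract Zero_fract_def)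
  then have "p \<noteq> 0" by (auto simp: ev1_simps)
  then show ?thesis using 1 e eval_Fract_I[of "p" "q"] by simp
qed

lemma eval_divide: "eval_s1 a b \<Longrightarrow> eval_s1 c d \<Longrightarrow> d \<noteq> 0 \<Longrightarrow> eval_s1 (a / c) (b / d)"
  by (simp add: divide_inverse eval_mult eval_inverse)

lemma eval_power: "eval_s1 a b \<Longrightarrow> eval_s1 (a ^ n) (b ^ n)"
  by (induct n) (simp_all add: eval_one eval_mult)

lemma eval_of_nat: "eval_s1 (of_nat n) (of_nat n)"
  by (induct n) (simp_all add: eval_zero eval_one eval_add)

lemma eval_numeral: "eval_s1 (numeral n) (numeral n)"
  using eval_of_nat[of "numeral n"] by simp

lemma eval_sum: "(\<And>i. i \<in> A \<Longrightarrow> eval_s1 (f i) (g i)) \<Longrightarrow> eval_s1 (sum f A) (sum g A)"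
  by (induct A rule: infinite_finite_induct) (auto simp: eval_zero eval_add)

lemma eval_sK: "eval_s1 sK 1"
  using eval_Fract_I[of 1 "[:[:[:0, 1:]:]:]"] by (simp add: sK_def ev1_simps ev1_def map_poly_pCons One_fract_def one_pCons)

lemma eval_QmK: "eval_s1 QmK QmL"
  using eval_Fract_I[of 1 "[:[:0, 1:]:]"] by (simp add: QmK_def QmL_def ev1_simps ev1_def map_poly_pCons)

lemma eval_QnK: "eval_s1 QnK QnL"
  using eval_Fract_I[of 1 "[:0, 1:]"] by (simp add: QnK_def QnL_def ev1_simps ev1_def map_poly_pCons)



lemma coeff_skm: "coeff (a ** b) k = (\<Sum>i\<le>k. coeff a i * (sigK ^^ i) (coeff b (k - i)))"
proof -
  define g where "g i = (if i \<le> k then coeff a i * (sigK ^^ i) (coeff b (k - i)) else 0)" for i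
  have "coeff (a ** b) k = (\<Sum>i\<le>degree a. g i)"
    unfolding skm_def coeff_sum g_def
    by (intro sum.cong refl) (auto simp: coeff_monom_mult coeff_map_poly sigpow0)
  also have "\<dots> = (\<Sum>i\<le>degree a + k. g i)"
    by (rule sum.mono_neutral_left) (auto simp: g_def coeff_eq_0)
  also have "\<dots> = (\<Sum>i\<le>k. g i)"
    by (rule sum.mono_neutral_right) (auto simp: g_def)
  also have "\<dots> = (\<Sum>i\<le>k. coeff a i * (sigK ^^ i) (coeff b (k - i)))"
    by (intro sum.cong refl) (auto simp: g_def)
  finally show ?thesis .
qed

lemma eps_skm: assumes "eps_s a a'" "eps_s b b'" shows "eps_s (a ** b) (a' * b')"
  unfolding eps_s_def coeff_skm coeff_mult
  using assms by (auto simp: eps_s_def intro!: eval_sum eval_mult eval_sigpow)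

lemma eps_add: "eps_s a a' \<Longrightarrow> eps_s b b' \<Longrightarrow> eps_s (a + b) (a' + b')"
  by (simp add: eps_s_def eval_add)

lemma eps_diff: "eps_s a a' \<Longrightarrow> eps_s b b' \<Longrightarrow> eps_s (a - b) (a' - b')"
  by (simp add: eps_s_def eval_diff)

lemma eps_C: "eval_s1 c d \<Longrightarrow> eps_s [:c:] [:d:]"
  by (auto simp: eps_s_def coeff_pCons eval_zero split: nat.splits)

lemma eps_one: "eps_s 1 1"
  using eps_C[OF eval_one] by (simp add: one_pCons)

lemma eps_Em: "eps_s Em [:0, 1:]"
  by (auto simp: eps_s_def Em_def coeff_monom coeff_pCons eval_zero eval_one split: nat.splits)

definition sL :: L where "sL = 1"
definition XL :: "L poly" where "XL = [:0, 1:]"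

abbreviation CL :: "L \<Rightarrow> L poly" where "CL c \<equiv> [:c:]"

definition PhiL :: "nat \<Rightarrow> L" where "PhiL k = 1 - sL ^ k * QmL ^ 4"

definition u1L :: "L poly \<Rightarrow> L poly" where
  "u1L e = CL (1 / PhiL 6) * e - CL (sL^2 * QmL^2 / PhiL 2)"
definition v1L :: "L poly \<Rightarrow> L poly" where
  "v1L e = CL (sL^2 * QmL^2 / PhiL 6) * e - CL (1 / PhiL 2)"
definition u2L :: "L poly \<Rightarrow> L poly" where
  "u2L e = CL (sL^12 * QmL^4 / (PhiL 10 * PhiL 12)) * e * e
        - CL (sL^4 * (1 + sL^2) * QmL^2 / (PhiL 6 * PhiL 10)) * e
        + CL (1 / (PhiL 4 * PhiL 6))"
definition v2L :: "L poly \<Rightarrow> L poly" where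
  "v2L e = CL (1 / (PhiL 10 * PhiL 12)) * e * e
        - CL (sL^2 * (1 + sL^2) * QmL^2 / (PhiL 6 * PhiL 10)) * e
        + CL (sL^4 * QmL^4 / (PhiL 4 * PhiL 6))"
definition YopL :: "L poly \<Rightarrow> L poly" where
  "YopL e = u2L e * u1L e * (e - CL (sL^2 * QmL^2))"

definition P0L :: "L poly \<Rightarrow> L poly" where
  "P0L e =
     CL (sL^2 - sL^4) * u2L e * v1L e * (CL (QmL^2) * e - 1)
   + CL (sL^2 * (QnL^2 + 1 + inverse (QnL^2))) * u2L e * u1L e * (CL (QmL^2) * e - 1)
   + CL (sL^2) * u2L e * u1L e * CL (sL^2 * QmL^2 + inverse (sL^2) * inverse (QmL^2))
       * (CL (QmL^2) * e - 1)
   + CL (sL^2 - sL^4) * u2L e * (CL (QmL^2) * e - 1)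
   - YopL e * CL (QmL^2 * QnL^2 + QmL^2 * inverse (QnL^2) + 3
                 + inverse (QmL^2) * QnL^2 + inverse (QmL^2) * inverse (QnL^2))
   + CL (inverse (sL^2) * (QnL^2 - sL^2 + inverse (QnL^2))) * v2L e * v1L e
       * (e - CL (sL^2 * QmL^2))
   + CL (inverse (sL^2)) * v2L e * v1L e * CL (sL^2 * QmL^2 + inverse (sL^2) * inverse (QmL^2))
       * (e - CL (sL^2 * QmL^2))
   + CL (inverse (sL^4) - inverse (sL^2)) * v2L e * CL (inverse (QmL^2)) * (e - CL (sL^2 * QmL^2))
   - CL (inverse (sL^4)) * v2L e * u1L e * (e - CL (sL^2 * QmL^2))"

definition P1L :: "L poly \<Rightarrow> L poly" where
  "P1L e = (e + 1) * CL ((1 - sL^2 * QmL^2) * (1 - sL^6 * QmL^2) / (1 + sL^4 * QmL^2))"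

definition AmL :: "L poly" where
  "AmL = P1L (CL sL * XL) * P0L (CL sL * XL)"

lemma QmL_nz: "QmL \<noteq> 0"
  by (simp add: QmL_def eq_fract Zero_fract_def)

lemma QnL_nz: "QnL \<noteq> 0"
  by (simp add: QnL_def eq_fract Zero_fract_def)

lemma QmL_pow: "QmL ^ k = Fract ([:[:0, 1:]:] ^ k) 1"
  by (induct k) (simp_all add: QmL_def One_fract_def)

lemma const_pow: "[:c:] ^ k = [:c ^ k:]"
  by (induct k) (simp_all add: one_pCons mult.commute)

lemma Phi_nz: "1 - QmL ^ 4 \<noteq> 0"
proof
  assume "1 - QmL ^ 4 = 0"
  then have "Fract (1 - [:[:0, 1:]:] ^ 4) 1 = Fract (0::rp2) 1"
    by (simp add: QmL_pow One_fract_def Zero_fract_def)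
  then have "1 - [:[:0, 1::rat:]:] ^ 4 = 0" by (simp add: eq_fract)
  then have "poly (coeff (1 - [:[:0, 1::rat:]:] ^ 4) 0) 2 = 0" by simp
  then show False by (simp add: const_pow poly_power)
qed

lemma onep_nz: "1 + QmL ^ 2 \<noteq> 0"
proof
  assume "1 + QmL ^ 2 = 0"
  then have "Fract (1 + [:[:0, 1:]:] ^ 2) 1 = Fract (0::rp2) 1"
    by (simp add: QmL_pow One_fract_def Zero_fract_def)
  then have "1 + [:[:0, 1::rat:]:] ^ 2 = 0" by (simp add: eq_fract)
  then have "poly (coeff (1 + [:[:0, 1::rat:]:] ^ 2) 0) 2 = 0" by simp
  then show False by (simp add: const_pow poly_power)
qed

lemma Q4_ne1: "QmL ^ 4 \<noteq> 1"
  using Phi_nz by simp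

lemma PhiL_nz: "PhiL k \<noteq> 0"
  using Phi_nz by (simp add: PhiL_def sL_def)

lemmas eps_rules = eps_skm eps_add eps_diff eps_C eps_one eps_Em
  eval_add eval_diff eval_mult eval_divide eval_inverse eval_power eval_numeral eval_one eval_zero
  eval_sK[folded sL_def] eval_QmK eval_QnK

lemma eps_Am: "eps_s AmW AmL"
  unfolding AmW_def AmL_def P0_def P0L_def P1_def P1L_def Yop_def YopL_def u1_def u1L_def
    u2_def u2L_def v1_def v1L_def v2_def v2L_def Phi_def PhiL_def XL_def
  apply (intro eps_rules)
  apply (simp_all add: sL_def Phi_nz onep_nz QmL_nz QnL_nz Q4_ne1)
  done

lemma inj_L: "inj (\<lambda>n::nat. (of_nat n :: L))"
  proof (rule injI)
    fix n m :: nat assume "(of_nat n :: L) = of_nat m"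
    then have "Fract (of_nat n :: rp2) 1 = Fract (of_nat m) 1" by (simp only: Fract_of_nat_eq)
    then have "(of_nat n :: rp2) * 1 = of_nat m * 1" by (subst (asm) eq_fract(1)) simp_all
    then show "n = m" by (simp only: mult_1_right of_nat_eq_iff)
  qed

lemma L_infinite: "infinite (UNIV :: L set)"
proof -
  have "infinite (range (\<lambda>n::nat. (of_nat n :: L)))" by (rule range_inj_infinite[OF inj_L])
  then show ?thesis by (rule infinite_super[rotated]) simp
qed

lemma poly_ext_L: assumes "\<And>x. poly p x = poly q (x::L)" shows "p = q"
proof (rule ccontr)
  assume "p \<noteq> q"
  then have "p - q \<noteq> 0" by simp
  then have "finite {x. poly (p - q) x = 0}" by (rule poly_roots_finite)
  moreover have "{x. poly (p - q) x = 0} = UNIV" using assms by simp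
  ultimately show False using L_infinite by simp
qed

lemma Npoly: fixes a b y :: "'a::comm_ring_1"
  shows "(a*(b*b+b+1) + b*(a*a+1)) * (a*y-1)^3*(y-a) - (a*y-1)^2*(y-a)^2 * (a*a*b*b+a*a+3*a*b+b*b+1)
    + (a*(b*b-b+1) + b*(a*a+1)) * (y-a)^3*(a*y-1) - a*b*(y-a)^4
   = - (y-a)*(1-a)*(1+a)^2 * (a*a*b*y^3 + (a*a*b*b - a*b*b + a*a - 2*a*b - a + b)*y^2
        + (a*a*b - a*b*b - 2*a*b + b*b - a + 1)*y + b)"
  by (simp add: algebra_simps power2_eq_square power3_eq_cube power4_eq_xxxx)

abbreviation DL :: L where "DL \<equiv> 1 - QmL^4"

lemma pu1: "poly (u1L e) x = (poly e x - QmL^2) / DL"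
  by (simp add: u1L_def PhiL_def sL_def diff_divide_distrib)
lemma pv1: "poly (v1L e) x = (QmL^2 * poly e x - 1) / DL"
  by (simp add: v1L_def PhiL_def sL_def diff_divide_distrib)
lemma g_u2: "(D::'a::field) \<noteq> 0 \<Longrightarrow> q^4 * (y*y)/(D*D) - 2*q^2*y/(D*D) + 1/(D*D) = (q^2*y-1)^2/D^2"
  by (simp add: field_simps power2_eq_square power4_eq_xxxx)
lemma g_v2: "(D::'a::field) \<noteq> 0 \<Longrightarrow> y*y/(D*D) - 2*q^2*y/(D*D) + q^4/(D*D) = (y-q^2)^2/D^2"
  by (simp add: field_simps power2_eq_square power4_eq_xxxx)

lemma pu2: "poly (u2L e) x = (QmL^2 * poly e x - 1)^2 / DL^2"
  apply (simp add: u2L_def PhiL_def sL_def) by (rule g_u2[OF Phi_nz])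
lemma pv2: "poly (v2L e) x = (poly e x - QmL^2)^2 / DL^2"
  apply (simp add: v2L_def PhiL_def sL_def) by (rule g_v2[OF Phi_nz])


definition NN :: "'a::comm_ring_1 \<Rightarrow> 'a \<Rightarrow> 'a \<Rightarrow> 'a" where
 "NN a b y = (a*(b*b+b+1) + b*(a*a+1)) * (a*y-1)^3*(y-a) - (a*y-1)^2*(y-a)^2 * (a*a*b*b+a*a+3*a*b+b*b+1)
    + (a*(b*b-b+1) + b*(a*a+1)) * (y-a)^3*(a*y-1) - a*b*(y-a)^4"

lemma gP0: fixes a b y D :: "'a::field"
  assumes "a \<noteq> 0" "b \<noteq> 0" "D \<noteq> 0"
  shows "(b + 1 + inverse b) * ((a * y - 1)^2 * (y - a) * (a * y - 1)) / (D^2 * D) +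
     (a + inverse a) * ((a * y - 1)^2 * (y - a) * (a * y - 1)) / (D^2 * D) -
     (a * b + a * inverse b + 3 + inverse a * b + inverse a * inverse b) *
     ((a * y - 1)^2 * (y - a) * (y - a)) / (D^2 * D) +
     (b - 1 + inverse b) * ((y - a)^2 * (a * y - 1) * (y - a)) / (D^2 * D) +
     (a + inverse a) * ((y - a)^2 * (a * y - 1) * (y - a)) / (D^2 * D) -
     (y - a)^2 * (y - a) * (y - a) / (D^2 * D) =
     NN a b y / (D ^ 3 * a * b)"
  using assms unfolding NN_def
  by (simp add: field_simps power2_eq_square power3_eq_cube power4_eq_xxxx)

lemma pP0: "poly (P0L e) x = NN (QmL^2) (QnL^2) (poly e x) / (DL^3 * QmL^2 * QnL^2)"
  unfolding P0L_def YopL_def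
  apply (simp add: pu1 pv1 pu2 pv2 sL_def del: power_eq_if)
  by (rule gP0) (simp_all add: QmL_nz QnL_nz Phi_nz Q4_ne1)
definition AA :: "'a::comm_ring_1 \<Rightarrow> 'a \<Rightarrow> 'a \<Rightarrow> 'a" where
  "AA a b y = a*a*b*y^3 + (a*a*b*b - a*b*b + a*a - 2*a*b - a + b)*y^2
        + (a*a*b - a*b*b - 2*a*b + b*b - a + 1)*y + b"

lemma gFin0: fixes a b x u v A :: "'a::field"
  assumes "a \<noteq> 0" "b \<noteq> 0" "u \<noteq> 0" "v \<noteq> 0"
  shows "(x + 1) * (u * u / v) * ((- (x-a)*u*v^2 * A) / ((u * v)^3 * a * b))
    = - 1 / (v^2 * a * b) * ((x + 1) * (x - a) * A)"
  using assms by (simp add: field_simps power2_eq_square power3_eq_cube)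

lemma gFin: fixes a b x :: "'a::field"
  assumes "a \<noteq> 0" "b \<noteq> 0" "1 - a \<noteq> 0" "1 + a \<noteq> 0"
  shows "(x + 1) * ((1 - a) * (1 - a) / (1 + a)) * (NN a b x / (((1 - a) * (1 + a))^3 * a * b))
    = - 1 / ((1 + a)^2 * a * b) * ((x + 1) * (x - a) * AA a b x)"
proof -
  have n: "NN a b x = - (x-a)*(1-a)*(1+a)^2 * AA a b x"
    unfolding NN_def AA_def by (rule Npoly)
  show ?thesis unfolding n by (rule gFin0[OF assms])
qed

lemma sq4: "1 - (q::'a::comm_ring_1)^4 = (1 - q^2)*(1+q^2)"
  by (simp add: algebra_simps power2_eq_square power4_eq_xxxx)
lemma gr: "poly (smult c (([:0, 1:] + 1) * ([:0, 1:] - [:a:]) * P)) (x::'a::comm_ring_1) = c * ((x+1)*(x-a)*poly P x)"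
  by (simp add: algebra_simps)
lemma gA: "poly [: n^2,
           q^4 * n^2 - q^2 * n^4 - 2 * q^2 * n^2 + n^4 - q^2 + 1,
           q^4 * n^4 - q^2 * n^4 + q^4 - 2 * q^2 * n^2 - q^2 + n^2,
           q^4 * n^2 :] x = AA (q^2) (n^2) (x::'a::comm_ring_1)"
  by (simp add: AA_def algebra_simps power2_eq_square power3_eq_cube power4_eq_xxxx)

lemma AmL_eq: "AmL = smult (- 1 / ((1 + QmL^2)^2 * QmL^2 * QnL^2))
        (([:0, 1:] + 1) * ([:0, 1:] - [:QmL^2:]) * ALk)"
proof (rule poly_ext_L)
  fix x
  have e0: "poly (CL sL * XL) x = x" by (simp add: sL_def XL_def)
  have p1: "poly (P1L (CL sL * XL)) x = (x + 1) * ((1 - QmL^2) * (1 - QmL^2) / (1 + QmL^2))"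
    by (simp add: P1L_def sL_def XL_def)
  have D: "DL = (1 - QmL^2) * (1 + QmL^2)" by (rule sq4)
  have p0: "poly (P0L (CL sL * XL)) x = NN (QmL^2) (QnL^2) x / (((1 - QmL^2) * (1 + QmL^2))^3 * QmL^2 * QnL^2)"
    using pP0[of "CL sL * XL" x] unfolding e0 D .
  have pA: "poly ALk x = AA (QmL^2) (QnL^2) x"
    unfolding ALk_def by (rule gA)
  have a1: "1 - QmL^2 \<noteq> 0" using Phi_nz
    using D by auto
  have r: "poly (smult (- 1 / ((1 + QmL^2)^2 * QmL^2 * QnL^2))
        (([:0, 1:] + 1) * ([:0, 1:] - [:QmL^2:]) * ALk)) x
     = - 1 / ((1 + QmL^2)^2 * QmL^2 * QnL^2) * ((x + 1) * (x - QmL^2) * AA (QmL^2) (QnL^2) x)"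
    unfolding gr pA ..
  show "poly AmL x = poly (smult (- 1 / ((1 + QmL^2)^2 * QmL^2 * QnL^2))
        (([:0, 1:] + 1) * ([:0, 1:] - [:QmL^2:]) * ALk)) x"
    unfolding r AmL_def poly_mult p1 p0
    by (rule gFin) (use QmL_nz QnL_nz a1 onep_nz in simp_all)
qed


theorem mainTheorem3:
  shows "eps_s AmW
     (smult (- 1 / ((1 + QmL^2)^2 * QmL^2 * QnL^2))
        (([:0, 1:] + 1) * ([:0, 1:] - [:QmL^2:]) * ALk))"
  using eps_Am unfolding AmL_eq .

end
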